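(* Let $T$ be a $C_{p^rq^s}$-transfer system with exactly two connected components. If the connected component of $(0,0)$ equals $L_{(\ell,k)}$ for some $\ell<r$ and $k<s$, then $T$ is not lesser simply paired.
   Context: $p,q$ are distinct primes and $r,s\ge 0$ integers. The subgroups of $C_{p^rq^s}$ are identified with grid points $(i,j)$, $0\le i\le r$, $0\le j\le s$, where $(i,j)$ stands for $C_{p^iq^j}$ (intersection is coordinatewise minimum). A $C_{p^rq^s}$-transfer system is a partial order $\to$ on these vertices such that: $(i_1,j_1)\to(i_2,j_2)$ implies $i_1\le i_2$, $j_1\le j_2$; it is reflexive and transitive; and $(i_1,j_1)\to(i_2,j_2)$ implies $(\min\{i_1,a\},\min\{j_1,b\})\to(\min\{i_2,a\},\min\{j_2,b\})$ for every vertex $(a,b)$. Connected components are those of the underlying undirected graph. $L_{(\ell,k)}=\{(i,j): 0\le i\le\ell,\ 0\le j\le s\}\cup\{(i,j): 0\le i\le r,\ 0\le j\le k\}$. A transfer system is saturated if whenever $L\le K\le H$ and $L\to H$ is in it then $K\to H$ is in it; $\mathrm{Hull}(T)$ is the smallest saturated transfer system containing $T$; $T_c$ is the complete transfer system. A pair $(T,T')$ is compatible if $T\subseteq T'$ and for all subgroups $A,B,C$ with $B,C\le A$: if $B\to A$ is in $T$ and $B\cap C\to B$ is in $T'$ then $C\to A$ is in $T'$. $T$ is lesser simply paired if for every transfer system $T'\supseteq T$, $(T,T')$ is compatible iff $T'\in\{\mathrm{Hull}(T),T_c\}$. *)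

theory Defs
  imports Main
begin

(* Subgroups of C_{p^r q^s} are grid points (i,j), 0<=i<=r, 0<=j<=s;
   (i,j) stands for C_{p^i q^j}. *)
type_synonym vtx = "nat \<times> nat"

definition grid :: "nat \<Rightarrow> nat \<Rightarrow> vtx set" where
  "grid r s = {(i,j). i \<le> r \<and> j \<le> s}"

definition sub :: "vtx \<Rightarrow> vtx \<Rightarrow> bool" where
  "sub a b \<longleftrightarrow> fst a \<le> fst b \<and> snd a \<le> snd b"

definition meet :: "vtx \<Rightarrow> vtx \<Rightarrow> vtx" where
  "meet a b = (min (fst a) (fst b), min (snd a) (snd b))"

(* a transfer system is a relation T, (x,y) \<in> T meaning x \<rightarrow> y *)
definition transfer_system :: "nat \<Rightarrow> nat \<Rightarrow> vtx rel \<Rightarrow> bool" where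
  "transfer_system r s T \<longleftrightarrow>
     T \<subseteq> grid r s \<times> grid r s \<and>
     (\<forall>x y. (x,y) \<in> T \<longrightarrow> sub x y) \<and>
     (\<forall>x\<in>grid r s. (x,x) \<in> T) \<and>
     trans T \<and>
     (\<forall>x y v. (x,y) \<in> T \<longrightarrow> v \<in> grid r s \<longrightarrow> (meet x v, meet y v) \<in> T)"

definition component :: "nat \<Rightarrow> nat \<Rightarrow> vtx rel \<Rightarrow> vtx \<Rightarrow> vtx set" where
  "component r s T x = {y \<in> grid r s. (x,y) \<in> (T \<union> T\<inverse>)\<^sup>*}"

definition components :: "nat \<Rightarrow> nat \<Rightarrow> vtx rel \<Rightarrow> vtx set set" where
  "components r s T = component r s T ` grid r s"

definition Lset :: "nat \<Rightarrow> nat \<Rightarrow> nat \<Rightarrow> nat \<Rightarrow> vtx set" where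
  "Lset r s l k = {(i,j). i \<le> l \<and> j \<le> s} \<union> {(i,j). i \<le> r \<and> j \<le> k}"

definition saturated :: "nat \<Rightarrow> nat \<Rightarrow> vtx rel \<Rightarrow> bool" where
  "saturated r s T \<longleftrightarrow>
     (\<forall>L\<in>grid r s. \<forall>K\<in>grid r s. \<forall>H\<in>grid r s.
        sub L K \<longrightarrow> sub K H \<longrightarrow> (L,H) \<in> T \<longrightarrow> (K,H) \<in> T)"

definition Tc :: "nat \<Rightarrow> nat \<Rightarrow> vtx rel" where
  "Tc r s = {(x,y). x \<in> grid r s \<and> y \<in> grid r s \<and> sub x y}"

definition Hull :: "nat \<Rightarrow> nat \<Rightarrow> vtx rel \<Rightarrow> vtx rel" where
  "Hull r s T = \<Inter>{T'. transfer_system r s T' \<and> saturated r s T' \<and> T \<subseteq> T'}"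

definition compatible :: "nat \<Rightarrow> nat \<Rightarrow> vtx rel \<Rightarrow> vtx rel \<Rightarrow> bool" where
  "compatible r s T T' \<longleftrightarrow> T \<subseteq> T' \<and>
     (\<forall>A\<in>grid r s. \<forall>B\<in>grid r s. \<forall>C\<in>grid r s.
        sub B A \<longrightarrow> sub C A \<longrightarrow> (B,A) \<in> T \<longrightarrow> (meet B C, B) \<in> T' \<longrightarrow> (C,A) \<in> T')"

definition lesser_simply_paired :: "nat \<Rightarrow> nat \<Rightarrow> vtx rel \<Rightarrow> bool" where
  "lesser_simply_paired r s T \<longleftrightarrow>
     (\<forall>T'. transfer_system r s T' \<and> T \<subseteq> T' \<longrightarrow>
        (compatible r s T T' \<longleftrightarrow> (T' = Hull r s T \<or> T' = Tc r s)))"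

end

theory Submission
  imports Defs
begin

definition DD :: "nat \<Rightarrow> nat \<Rightarrow> nat \<Rightarrow> nat \<Rightarrow> vtx rel" where
  "DD r s l k = {(x,y). x \<in> grid r s \<and> y \<in> grid r s \<and> sub x y \<and>
      (fst y \<le> l \<or> snd y \<le> k \<or> (fst x > l \<and> snd x > k))}"

definition TT :: "nat \<Rightarrow> nat \<Rightarrow> nat \<Rightarrow> nat \<Rightarrow> vtx rel" where
  "TT r s l k = {(x,y). x \<in> grid r s \<and> y \<in> grid r s \<and> sub x y \<and>
      (fst y \<le> l \<or> snd y \<le> k \<or> fst x > l \<or> snd x \<le> k)}"

lemma DD_ts: "transfer_system r s (DD r s l k)"
  unfolding transfer_system_def DD_def trans_def
  by (auto simp: grid_def sub_def meet_def min_def)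

lemma DD_sat: "saturated r s (DD r s l k)"
  unfolding saturated_def DD_def
  by (auto simp: grid_def sub_def)

lemma TT_ts: "transfer_system r s (TT r s l k)"
  unfolding transfer_system_def TT_def trans_def
  by (auto simp: grid_def sub_def meet_def min_def)

lemma DD_TT: "DD r s l k \<subseteq> TT r s l k"
  unfolding DD_def TT_def by auto

lemma TT_compat:
  assumes "T \<subseteq> DD r s l k"
  shows "compatible r s T (TT r s l k)"
  unfolding compatible_def
proof (intro conjI ballI impI)
  show "T \<subseteq> TT r s l k" using assms DD_TT by blast
next
  fix A B C assume g: "A \<in> grid r s" "B \<in> grid r s" "C \<in> grid r s"
    and "sub B A" "sub C A" "(B, A) \<in> T" "(meet B C, B) \<in> TT r s l k"
  then show "(C, A) \<in> TT r s l k"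
    using assms unfolding TT_def DD_def
    by (auto simp: grid_def sub_def meet_def min_def split: if_splits)
qed

theorem mainTheorem15:
  fixes r s l k :: nat and T :: "vtx rel"
  assumes "transfer_system r s T"
    and "card (components r s T) = 2"
    and "l < r" and "k < s"
    and "component r s T (0,0) = Lset r s l k"
  shows "\<not> lesser_simply_paired r s T"
proof
  assume lsp: "lesser_simply_paired r s T"
  have ts: "T \<subseteq> grid r s \<times> grid r s" "\<And>x y. (x,y) \<in> T \<Longrightarrow> sub x y"
    using assms(1) unfolding transfer_system_def by auto
  have TD: "T \<subseteq> DD r s l k"
  proof
    fix p assume p: "p \<in> T"
    obtain x y where xy: "p = (x,y)" by (cases p)
    have g: "x \<in> grid r s" "y \<in> grid r s" using ts(1) p xy by auto
    have sxy: "sub x y" using ts(2) p xy by auto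
    have "fst y \<le> l \<or> snd y \<le> k \<or> (fst x > l \<and> snd x > k)"
    proof (rule ccontr)
      assume c: "\<not> ?thesis"
      hence "x \<in> Lset r s l k" using g by (auto simp: Lset_def grid_def)
      hence "((0,0),x) \<in> (T \<union> T\<inverse>)\<^sup>*" using assms(5) unfolding component_def by auto
      moreover have "(x,y) \<in> (T \<union> T\<inverse>)" using p xy by auto
      ultimately have "((0,0),y) \<in> (T \<union> T\<inverse>)\<^sup>*" by (rule rtrancl_into_rtrancl)
      hence "y \<in> Lset r s l k" using assms(5) g unfolding component_def by auto
      thus False using c g by (auto simp: Lset_def grid_def)
    qed
    thus "p \<in> DD r s l k" using g sxy xy unfolding DD_def by auto
  qed
  have HD: "Hull r s T \<subseteq> DD r s l k"
    unfolding Hull_def using DD_ts DD_sat TD by blast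
  have in1: "((0,0),(r,s)) \<in> TT r s l k" unfolding TT_def by (auto simp: grid_def sub_def)
  have out1: "((0,0),(r,s)) \<notin> DD r s l k" using assms(3,4) unfolding DD_def by auto
  have out2: "((0,s),(r,s)) \<notin> TT r s l k" using assms(3,4) unfolding TT_def by auto
  have in2: "((0,s),(r,s)) \<in> Tc r s" unfolding Tc_def by (auto simp: grid_def sub_def)
  have "TT r s l k = Hull r s T \<or> TT r s l k = Tc r s"
    using lsp TT_ts TT_compat[OF TD] TD DD_TT unfolding lesser_simply_paired_def by blast
  thus False using HD in1 out1 out2 in2 by blast
qed

end
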